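(* In the setting of the Causal Complementation Theorem (with $\hat a\ne 0$, $\hat d\ge 0$, $F_0,F_1$ causal not both zero with $\gcd(F_0,F_1)=z^{-d_F}$, $0\le d_F\le\hat d$, $0\le M\le \hat d-d_F$, $\ell$ such that $\widetilde F_\ell=z^{d_F}F_\ell$ is left-justified, and $(R_0,R_1)$ the unique causal complement to $(F_0,F_1)$ for $\hat a z^{-\hat d}$ that is degree-reducing modulo $M$ in $F_\ell$), let $k>0$ be an integer and suppose $z^{-(M+k)}\mid R_\ell$. Then, with $\ell'=1-\ell$, we have $z^{-(M+k)}\mid R_{\ell'}$ if and only if $\hat{d}-d_F\geq M+k$.
   Context: A causal filter is a polynomial in $z^{-1}$ with complex coefficients; $\deg$ denotes degree in $z^{-1}$; divisibility and gcd are in $\mathbb{C}[z^{-1}]$. A causal filter $F$ is left-justified if its constant term is nonzero. $(R_0,R_1)$ is a causal complement to $(F_0,F_1)$ for $\hat{a}z^{-\hat{d}}$ if $R_0,R_1$ are causal and $F_0R_1-F_1R_0=\hat{a}z^{-\hat{d}}$; it is degree-reducing modulo $M$ in $F_\ell$ if $z^{-M}$ divides both $R_0,R_1$ and $\deg(R_\ell)<\deg(F_\ell)-\deg\gcd(F_0,F_1)+M$. *)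

theory Defs
  imports "HOL-Computational_Algebra.Computational_Algebra" "HOL-Computational_Algebra.Field_as_Ring"
begin

text \<open>A causal filter is a polynomial in z^-1; we use the variable X of complex poly
  to stand for z^-1, so z^-n is monom 1 n.\<close>

definition left_justified :: "complex poly \<Rightarrow> bool" where
  "left_justified F \<longleftrightarrow> coeff F 0 \<noteq> 0"

definition causal_complement ::
  "complex poly \<Rightarrow> complex poly \<Rightarrow> complex poly \<Rightarrow> complex poly \<Rightarrow> complex \<Rightarrow> nat \<Rightarrow> bool" where
  "causal_complement F0 F1 R0 R1 a d \<longleftrightarrow> F0 * R1 - F1 * R0 = smult a (monom 1 d)"

text \<open>Degree-reducing modulo M in F_l (filters indexed by l in {0,1});
  deg 0 is read as minus infinity, so R_l = 0 always satisfies the degree bound.\<close>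
definition degree_reducing ::
  "(nat \<Rightarrow> complex poly) \<Rightarrow> (nat \<Rightarrow> complex poly) \<Rightarrow> nat \<Rightarrow> nat \<Rightarrow> bool" where
  "degree_reducing F R M l \<longleftrightarrow>
     monom 1 M dvd R 0 \<and> monom 1 M dvd R 1 \<and>
     (R l = 0 \<or> int (degree (R l)) < int (degree (F l)) - int (degree (gcd (F 0) (F 1))) + int M)"

end

theory Submission
  imports Defs
begin

lemma dvd_cancel_G:
  fixes G R :: "complex poly"
  assumes "coeff G 0 \<noteq> 0" "monom 1 n dvd G * R"
  shows "monom 1 n dvd R"
proof (cases "R = 0")
  case True then show ?thesis by simp
next
  case False
  have G0: "G \<noteq> 0" using assms(1) by auto
  have "poly G 0 \<noteq> 0" using assms(1) by (simp add: poly_0_coeff_0)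
  then have oG: "order 0 G = 0" by (simp add: order_root)
  have "n \<le> order 0 (G * R)" using assms(2) monom_1_dvd_iff G0 False
    by (metis mult_eq_0_iff)
  also have "\<dots> = order 0 R" using G0 False oG by (simp add: order_mult)
  finally show ?thesis using monom_1_dvd_iff False by blast
qed

lemma key:
  fixes G0 G1 R0 R1 :: "complex poly"
  assumes eq: "G0 * R1 - G1 * R0 = smult c (monom 1 D)"
    and c: "c \<noteq> 0" and g: "coeff G0 0 \<noteq> 0" and r0: "monom 1 n dvd R0"
  shows "monom 1 n dvd R1 \<longleftrightarrow> n \<le> D"
proof
  assume r1: "monom 1 n dvd R1"
  have "monom 1 n dvd G0 * R1 - G1 * R0" using r0 r1 by (simp add: dvd_diff)
  then have "monom 1 n dvd smult c (monom 1 D)" using eq by simp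
  then have h: "\<forall>k<n. coeff (smult c (monom 1 D)) k = 0" using monom_1_dvd_iff' by blast
  show "n \<le> D"
  proof (rule ccontr)
    assume "\<not> n \<le> D"
    then have "D < n" by simp
    then have "coeff (smult c (monom 1 D)) D = 0" using h by blast
    then show False using c by simp
  qed
next
  assume nD: "n \<le> D"
  have "G0 * R1 = smult c (monom 1 D) + G1 * R0" using eq by (simp add: algebra_simps)
  moreover have "monom 1 n dvd smult c (monom 1 D)"
    using nD by (simp add: monom_1_dvd_iff')
  moreover have "monom 1 n dvd G1 * R0" using r0 by simp
  ultimately have "monom 1 n dvd G0 * R1" by simp
  then show "monom 1 n dvd R1" using dvd_cancel_G g by blast
qed

theorem mainTheorem4:
  fixes F R :: "nat \<Rightarrow> complex poly" and a :: complex and dhat dF M l k :: nat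
  assumes "a \<noteq> 0"
    and "F 0 \<noteq> 0 \<or> F 1 \<noteq> 0"
    and "gcd (F 0) (F 1) = monom 1 dF"
    and "dF \<le> dhat"
    and "M \<le> dhat - dF"
    and "l \<le> 1"
    and "left_justified (F l div monom 1 dF)"
    and "causal_complement (F 0) (F 1) (R 0) (R 1) a dhat"
    and "degree_reducing F R M l"
    and "k > 0"
    and "monom 1 (M + k) dvd R l"
  shows "monom 1 (M + k) dvd R (1 - l) \<longleftrightarrow> dhat - dF \<ge> M + k"
proof -
  define G where "G i = F i div monom 1 dF" for i
  have d0: "monom 1 dF dvd F 0" using assms(3) by (metis gcd_dvd1)
  have d1: "monom 1 dF dvd F 1" using assms(3) by (metis gcd_dvd2)
  have F0: "F 0 = monom 1 dF * G 0" using d0 unfolding G_def by simp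
  have F1: "F 1 = monom 1 dF * G 1" using d1 unfolding G_def by simp
  have mhat: "monom (1::complex) dhat = monom 1 dF * monom 1 (dhat - dF)"
    using assms(4) by (simp add: mult_monom)
  have "monom 1 dF * (G 0 * R 1 - G 1 * R 0) = monom 1 dF * smult a (monom 1 (dhat - dF))"
  proof -
    have "F 0 * R 1 - F 1 * R 0 = smult a (monom 1 dhat)"
      using assms(8) unfolding causal_complement_def .
    then show ?thesis unfolding F0 F1 mhat by (simp add: algebra_simps)
  qed
  then have eq: "G 0 * R 1 - G 1 * R 0 = smult a (monom 1 (dhat - dF))"
    by (subst (asm) mult_left_cancel) (auto simp: monom_eq_0_iff)
  have gl: "coeff (G l) 0 \<noteq> 0" using assms(7) unfolding left_justified_def G_def .
  show ?thesis
  proof (cases "l = 0")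
    case True
    then show ?thesis using key[OF eq assms(1)] gl assms(11) by simp
  next
    case False
    then have l1: "l = 1" using assms(6) by simp
    have eq': "G 1 * R 0 - G 0 * R 1 = smult (-a) (monom 1 (dhat - dF))"
      using eq by (metis minus_diff_eq smult_minus_left)
    show ?thesis using key[OF eq'] assms(1) gl assms(11) l1 by simp
  qed
qed

end
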